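(* Fix a finite tensor order $N<\infty$. For an input tensor $\mathcal{Y}\in\mathbb{R}^{I_1\times\cdots\times I_N}$ let $P=\prod_{k=1}^N I_k$, $I_{(-k)}=\prod_{j\neq k}I_j$, let $r_k$ be the post-threshold rank of mode $k$, and $r_{(-k)}=\prod_{j\neq k}r_j$. Assume that, for each $k=1,\dots,N$, $r_k=\mathcal{O}(I_k^{\alpha_k})$ with $0\le\alpha_k<1$, and set $\alpha_{\max}=\max_k\alpha_k$. Suppose the computational cost of TARST is $$T_{\mathrm{TARST}}=\mathcal{O}\!\Bigg(\sum_{k=1}^{N}\Big[\min\{I_k^2 I_{(-k)},\,I_k I_{(-k)}^2\}+\min\{I_k,\,I_{(-k)}\}+\frac{P\,r_{(-k)}}{I_k}\Big]\Bigg).$$ Then $T_{\mathrm{TARST}}=\mathcal{O}(P^{1+\varepsilon})$ with $\varepsilon=\max\{1/2,\alpha_{\max}\}<1$; in particular TARST runs in polynomial time in the input size $P$, with exponent strictly less than $2$.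
   Context: TARST (Tensor Automatic Rank-free Singular-value Thresholding) is the following non-iterative algorithm on an $N$-way tensor $\mathcal{Y}$: for each mode $k$, form the mode-$k$ unfolding $\mathbf{Y}_{(k)}\in\mathbb{R}^{I_k\times I_{(-k)}}$ (mode-$k$ indices as rows, all other indices flattened into columns), compute its SVD, apply hard thresholding to its singular values with a data-dependent threshold $\tau_{(k)}$ (singular values below $\tau_{(k)}$ are set to zero), and let $r_k$ be the number of retained singular values (the post-threshold rank of mode $k$); then reconstruct a Tucker approximation $\hat{\mathcal{X}}=(\mathcal{Y}\times_1\mathbf{U}_{(1)}^\top\cdots\times_N\mathbf{U}_{(N)}^\top)\times_1\mathbf{U}_{(1)}\cdots\times_N\mathbf{U}_{(N)}$ from the retained left singular vectors $\mathbf{U}_{(k)}$. Under the dense linear algebra model, the three phases cost, per mode $k$: SVD $\mathcal{O}(\min\{I_k^2I_{(-k)},I_kI_{(-k)}^2\})$, thresholding $\mathcal{O}(\min\{I_k,I_{(-k)}\})$, reconstruction $\mathcal{O}(P\,r_{(-k)}/I_k)$; the total cost is the sum over modes. Asymptotic notation $\mathcal{O}(\cdot)$ refers to growth as the mode dimensions (hence $P$) grow, with $N$ fixed. *)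

theory Defs
  imports Complex_Main "HOL-Library.Landau_Symbols"
begin

text \<open>Modes are indexed by 0..N-1. A problem instance is described, along a filter F
  (the regime in which the mode dimensions grow), by the mode dimensions I x k
  and the post-threshold ranks r x k.\<close>

definition tensor_size :: "nat \<Rightarrow> (nat \<Rightarrow> nat) \<Rightarrow> real" where
  "tensor_size N I = (\<Prod>k<N. real (I k))"

definition prod_except :: "nat \<Rightarrow> (nat \<Rightarrow> nat) \<Rightarrow> nat \<Rightarrow> real" where
  "prod_except N I k = (\<Prod>j\<in>{..<N} - {k}. real (I j))"

definition tarst_cost_expr :: "nat \<Rightarrow> (nat \<Rightarrow> nat) \<Rightarrow> (nat \<Rightarrow> nat) \<Rightarrow> real" where
  "tarst_cost_expr N I r =
     (\<Sum>k<N. min (real (I k) ^ 2 * prod_except N I k) (real (I k) * prod_except N I k ^ 2)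
            + min (real (I k)) (prod_except N I k)
            + tensor_size N I * prod_except N r k / real (I k))"

end

theory Submission
  imports Defs
begin

lemma min_le_sqrt:
  fixes a b :: real assumes "0 \<le> a" "0 \<le> b" shows "min a b \<le> sqrt (a * b)"
proof (cases "a \<le> b")
  case True
  have "a = sqrt (a * a)" using assms by simp
  also have "\<dots> \<le> sqrt (a * b)" using True assms by (intro real_sqrt_le_mono mult_left_mono) auto
  finally show ?thesis using True by simp
next
  case False
  have "b = sqrt (b * b)" using assms by simp
  also have "\<dots> \<le> sqrt (a * b)" using False assms by (intro real_sqrt_le_mono mult_right_mono) auto
  finally show ?thesis using False by simp
qed

lemma P_bounds:
  fixes P e :: real assumes "P = 0 \<or> P \<ge> 1" "1/2 \<le> e"
  shows "sqrt P \<le> P powr (1 + e)" "P * sqrt P \<le> P powr (1 + e)"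
proof -
  have "sqrt P \<le> P powr (1 + e) \<and> P * sqrt P \<le> P powr (1 + e)"
  proof (cases "P = 0")
    case True then show ?thesis by simp
  next
    case False
    then have P1: "P \<ge> 1" using assms by auto
    have "P powr (1 + 1/2) = P powr 1 * P powr (1/2)" by (rule powr_add)
    then have "P * sqrt P = P powr (1 + 1/2)"
      using P1 by (simp add: powr_half_sqrt)
    also have "\<dots> \<le> P powr (1 + e)" using P1 assms by (intro powr_mono) auto
    finally have h2: "P * sqrt P \<le> P powr (1 + e)" .
    have "sqrt P \<le> P * sqrt P" using P1 by (simp add: mult_le_cancel_right1)
    with h2 show ?thesis by linarith
  qed
  then show "sqrt P \<le> P powr (1 + e)" "P * sqrt P \<le> P powr (1 + e)" by auto
qed

lemma det_bound:
  fixes N :: nat and I r :: "nat \<Rightarrow> nat" and c \<alpha> :: "nat \<Rightarrow> real" and e :: real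
  assumes al: "\<forall>k<N. 0 \<le> \<alpha> k \<and> \<alpha> k \<le> e" and e: "1/2 \<le> e"
    and rc: "\<forall>k<N. real (r k) \<le> c k * real (I k) powr \<alpha> k"
  shows "tarst_cost_expr N I r \<le> real N * (2 + (\<Prod>j<N. max 1 (c j))) * tensor_size N I powr (1+e)"
proof -
  define P where "P = tensor_size N I"
  define C where "C = (\<Prod>j<N. max 1 (c j))"
  have P0: "P \<ge> 0" unfolding P_def tensor_size_def by (simp add: prod_nonneg)
  have Pc: "P = 0 \<or> P \<ge> 1"
  proof -
    define n where "n = (\<Prod>k<N. I k)"
    have "P = real n" unfolding P_def tensor_size_def n_def by simp
    then show ?thesis by (cases n) auto
  qed
  have C1: "C \<ge> 1" unfolding C_def by (rule prod_ge_1) auto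
  have Pk: "P = real (I k) * prod_except N I k" if "k < N" for k
    unfolding P_def tensor_size_def prod_except_def using that
    by (subst prod.remove[of _ k]) auto
  have pe0: "prod_except N I k \<ge> 0" for k unfolding prod_except_def by (simp add: prod_nonneg)
  have PE: "P powr (1+e) \<ge> 0" by simp
  have termb: "min (real (I k) ^ 2 * prod_except N I k) (real (I k) * prod_except N I k ^ 2)
            + min (real (I k)) (prod_except N I k)
            + P * prod_except N r k / real (I k) \<le> (2 + C) * P powr (1+e)" if k: "k < N" for k
  proof -
    let ?a = "real (I k)" and ?b = "prod_except N I k"
    have t1: "min (?a ^ 2 * ?b) (?a * ?b ^ 2) = P * min ?a ?b"
    proof -
      have e1: "?a ^ 2 * ?b = P * ?a" using Pk[OF k] by (simp add: power2_eq_square)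
      have e2: "?a * ?b ^ 2 = P * ?b" using Pk[OF k] by (simp add: power2_eq_square)
      show ?thesis unfolding e1 e2 using P0 by (simp add: min_mult_distrib_left)
    qed
    have m: "min ?a ?b \<le> sqrt P" using min_le_sqrt[of ?a ?b] pe0[of k] Pk[OF k] by simp
    have b1: "min (?a ^ 2 * ?b) (?a * ?b ^ 2) \<le> P powr (1+e)"
    proof -
      have "P * min ?a ?b \<le> P * sqrt P" using m P0 by (rule mult_left_mono)
      then show ?thesis using t1 P_bounds(2)[OF Pc e] by linarith
    qed
    have b2: "min ?a ?b \<le> P powr (1+e)" using m P_bounds(1)[OF Pc e] by linarith
    have b3: "P * prod_except N r k / ?a \<le> C * P powr (1+e)"
    proof (cases "I k = 0")
      case True then show ?thesis using C1 by simp
    next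
      case False
      then have a1: "?a \<ge> 1" by simp
      have eq: "P * prod_except N r k / ?a = ?b * prod_except N r k"
        using Pk[OF k] False by simp
      define S where "S = {..<N} - {k}"
      have rj: "real (r j) \<le> max 1 (c j) * real (I j) powr e" if j: "j \<in> S" for j
      proof (cases "I j = 0")
        case True then show ?thesis using rc j S_def by auto
      next
        case False
        have "real (I j) powr \<alpha> j \<le> real (I j) powr e" using False al j S_def
          by (intro powr_mono) auto
        have "c j * real (I j) powr \<alpha> j \<le> max 1 (c j) * real (I j) powr \<alpha> j"
          by (intro mult_right_mono) auto
        also have "\<dots> \<le> max 1 (c j) * real (I j) powr e"
          using \<open>real (I j) powr \<alpha> j \<le> real (I j) powr e\<close> by (intro mult_left_mono) auto
        finally have "c j * real (I j) powr \<alpha> j \<le> max 1 (c j) * real (I j) powr e" .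
        moreover have "real (r j) \<le> c j * real (I j) powr \<alpha> j" using rc j S_def by auto
        ultimately show ?thesis by linarith
      qed
      have "prod_except N r k \<le> (\<Prod>j\<in>S. max 1 (c j) * real (I j) powr e)"
        unfolding prod_except_def S_def[symmetric] by (rule prod_mono) (use rj in auto)
      also have "\<dots> = (\<Prod>j\<in>S. max 1 (c j)) * ?b powr e"
        unfolding prod.distrib prod_except_def S_def[symmetric]
        by (subst prod_powr_distrib) auto
      also have "\<dots> \<le> C * ?b powr e"
      proof -
        have "(\<Prod>j\<in>S. max 1 (c j)) \<le> C"
        proof -
          have "C = max 1 (c k) * (\<Prod>j\<in>S. max 1 (c j))"
            unfolding C_def S_def using k by (subst prod.remove[of _ k]) auto
          moreover have "(\<Prod>j\<in>S. max 1 (c j)) \<ge> 0" by (rule prod_nonneg) auto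
          ultimately show ?thesis by (simp add: mult_le_cancel_right1)
        qed
        then show ?thesis by (rule mult_right_mono) simp
      qed
      finally have rk: "prod_except N r k \<le> C * ?b powr e" .
      have "?b * prod_except N r k \<le> ?b * (C * ?b powr e)"
        using rk pe0[of k] by (rule mult_left_mono)
      also have "\<dots> = C * ?b powr (1+e)"
        using pe0[of k] by (cases "?b = 0") (auto simp: powr_add)
      also have "\<dots> \<le> C * P powr (1+e)"
      proof -
        have "?b \<le> P" using Pk[OF k] a1 pe0[of k] by (simp add: mult_le_cancel_right1)
        then have "?b powr (1+e) \<le> P powr (1+e)" using pe0[of k] e by (intro powr_mono2) auto
        then show ?thesis using C1 by simp
      qed
      finally show ?thesis using eq by simp
    qed
    show ?thesis using b1 b2 b3 by (simp add: algebra_simps)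
  qed
  have "tarst_cost_expr N I r \<le> (\<Sum>k<N. (2 + C) * P powr (1+e))"
    unfolding tarst_cost_expr_def P_def[symmetric] by (rule sum_mono) (use termb in auto)
  also have "\<dots> = real N * (2 + C) * P powr (1+e)" by simp
  finally show ?thesis unfolding P_def C_def .
qed

theorem proposition1:
  fixes N :: nat and F :: "'a filter"
    and I r :: "'a \<Rightarrow> nat \<Rightarrow> nat" and \<alpha> :: "nat \<Rightarrow> real"
    and T :: "'a \<Rightarrow> real" and \<epsilon> :: real
  assumes N_pos: "N \<ge> 1"
    and alpha_range: "\<forall>k<N. 0 \<le> \<alpha> k \<and> \<alpha> k < 1"
    and rank_growth: "\<forall>k<N. (\<lambda>x. real (r x k)) \<in> O[F](\<lambda>x. real (I x k) powr \<alpha> k)"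
    and cost: "T \<in> O[F](\<lambda>x. tarst_cost_expr N (I x) (r x))"
    and eps_def: "\<epsilon> = max (1/2) (Max (\<alpha> ` {..<N}))"
  shows "T \<in> O[F](\<lambda>x. tensor_size N (I x) powr (1 + \<epsilon>)) \<and> \<epsilon> < 1"
proof
  have "0 \<in> {..<N}" using N_pos by simp
  then have ne: "\<alpha> ` {..<N} \<noteq> {}" by blast
  show "\<epsilon> < 1" unfolding eps_def using ne alpha_range by (subst max_less_iff_conj) (auto simp: Max_less_iff)
  have al: "\<forall>k<N. 0 \<le> \<alpha> k \<and> \<alpha> k \<le> \<epsilon>" unfolding eps_def
  proof (intro allI impI conjI)
    fix k assume k: "k < N"
    show "0 \<le> \<alpha> k" using alpha_range k by auto
    have "\<alpha> k \<le> Max (\<alpha> ` {..<N})" using k by (intro Max_ge) auto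
    then show "\<alpha> k \<le> max (1/2) (Max (\<alpha> ` {..<N}))" by linarith
  qed
  have e: "1/2 \<le> \<epsilon>" unfolding eps_def by simp
  have "\<forall>k<N. \<exists>c. eventually (\<lambda>x. real (r x k) \<le> c * real (I x k) powr \<alpha> k) F"
  proof (intro allI impI)
    fix k assume "k < N"
    then have "(\<lambda>x. real (r x k)) \<in> O[F](\<lambda>x. real (I x k) powr \<alpha> k)" using rank_growth by auto
    then obtain c where "c > 0" "eventually (\<lambda>x. norm (real (r x k)) \<le> c * norm (real (I x k) powr \<alpha> k)) F"
      by (rule landau_o.bigE)
    then show "\<exists>c. eventually (\<lambda>x. real (r x k) \<le> c * real (I x k) powr \<alpha> k) F" by auto
  qed
  then obtain c where c: "\<forall>k<N. eventually (\<lambda>x. real (r x k) \<le> c k * real (I x k) powr \<alpha> k) F"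
    by metis
  have ev: "eventually (\<lambda>x. \<forall>k\<in>{..<N}. real (r x k) \<le> c k * real (I x k) powr \<alpha> k) F"
    by (rule eventually_ball_finite) (use c in auto)
  have "(\<lambda>x. tarst_cost_expr N (I x) (r x)) \<in> O[F](\<lambda>x. tensor_size N (I x) powr (1 + \<epsilon>))"
  proof (rule bigoI)
    show "eventually (\<lambda>x. norm (tarst_cost_expr N (I x) (r x)) \<le>
       (real N * (2 + (\<Prod>j<N. max 1 (c j)))) * norm (tensor_size N (I x) powr (1 + \<epsilon>))) F"
      using ev
    proof (rule eventually_mono)
      fix x assume h: "\<forall>k\<in>{..<N}. real (r x k) \<le> c k * real (I x k) powr \<alpha> k"
      have nn: "tarst_cost_expr N (I x) (r x) \<ge> 0"
        unfolding tarst_cost_expr_def prod_except_def tensor_size_def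
        by (intro sum_nonneg add_nonneg_nonneg divide_nonneg_nonneg mult_nonneg_nonneg prod_nonneg min.boundedI zero_le_power) auto
      have "tarst_cost_expr N (I x) (r x) \<le> real N * (2 + (\<Prod>j<N. max 1 (c j))) * tensor_size N (I x) powr (1+\<epsilon>)"
        by (rule det_bound[OF al e]) (use h in auto)
      then show "norm (tarst_cost_expr N (I x) (r x)) \<le>
       (real N * (2 + (\<Prod>j<N. max 1 (c j)))) * norm (tensor_size N (I x) powr (1 + \<epsilon>))"
        using nn by simp
    qed
  qed
  then show "T \<in> O[F](\<lambda>x. tensor_size N (I x) powr (1 + \<epsilon>))"
    using cost by (rule landau_o.big_trans[rotated])
qed

end
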